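(* Let $(B_\eta)_{\eta>0}$ be real random variables with $\|B_\eta\|_{L^\infty(\Omega)}\le M$ for all $\eta>0$ and $B_\eta=\eta\bar B_0+\eta^2\bar R_0+o(\eta^2)$ weakly in $L^2(\Omega)$ for some $\bar B_0,\bar R_0\in L^2(\Omega)$ (i.e. $\eta^{-2}(B_\eta-\eta\bar B_0-\eta^2\bar R_0)\rightharpoonup0$ weakly in $L^2(\Omega)$). Assume further that the laws $dP_\eta$ of $B_\eta$ satisfy $dP_\eta=\delta_0+\eta\,d\bar P_1+\eta^2d\bar P_2+o(\eta^2)$ for some compactly supported distributions $d\bar P_1,d\bar P_2$ (i.e. $\mathbb E\varphi(B_\eta)=\varphi(0)+\eta\langle d\bar P_1,\varphi\rangle+\eta^2\langle d\bar P_2,\varphi\rangle+o(\eta^2)$ for all smooth test functions $\varphi$). Then $dP_\eta=\delta_0-\eta\,\mathbb E(\bar B_0)\delta_0'+\frac{\eta^2}{2}\mathbb E(\bar B_0^2)\delta_0''-\eta^2\,\mathbb E(\bar R_0)\delta_0'+o(\eta^2)$ in $\mathcal E'(\mathbb R)$.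
   Context: In the paper these variables are the mother variables of a field $b_\eta(x,\omega)=\sum_{k\in\mathbb Z^d}\mathbf 1_{Q+k}(x)B_\eta^k(\omega)$ with $(B_\eta^k)$ i.i.d. copies of $B_\eta$. $\delta_0$ is the Dirac mass at $0$; $\langle\delta_0',\varphi\rangle=-\varphi'(0)$, $\langle\delta_0'',\varphi\rangle=\varphi''(0)$. $\mathcal E'(\mathbb R)$ is the space of compactly supported distributions. *)

theory Defs
  imports "HOL-Probability.Probability"
begin

definition smooth_fun :: "(real \<Rightarrow> real) \<Rightarrow> bool" where
  "smooth_fun \<phi> \<longleftrightarrow> (\<forall>k x. ((deriv ^^ k) \<phi>) differentiable (at x))"

text \<open>Compactly supported distributions on the real line, i.e. elements of E'(R):
  linear functionals on C-infinity(R) which are continuous for the C-infinity topology,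
  i.e. bounded by finitely many derivatives on a compact set.\<close>
definition compact_distribution :: "((real \<Rightarrow> real) \<Rightarrow> real) \<Rightarrow> bool" where
  "compact_distribution T \<longleftrightarrow>
     (\<forall>\<phi> \<psi> a b. smooth_fun \<phi> \<longrightarrow> smooth_fun \<psi> \<longrightarrow>
        T (\<lambda>x. a * \<phi> x + b * \<psi> x) = a * T \<phi> + b * T \<psi>) \<and>
     (\<exists>R C N. R \<ge> 0 \<and> C \<ge> 0 \<and>
        (\<forall>\<phi>. smooth_fun \<phi> \<longrightarrow>
           \<bar>T \<phi>\<bar> \<le> C * (\<Sum>k\<le>N. SUP x\<in>{-R..R}. \<bar>(deriv ^^ k) \<phi> x\<bar>)))"

end

theory Submission
  imports Defs
begin


lemma L2_lin:
  fixes f g :: "'a \<Rightarrow> real"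
  assumes [measurable]: "f \<in> borel_measurable M" "g \<in> borel_measurable M"
    and "integrable M (\<lambda>x. (f x)\<^sup>2)" "integrable M (\<lambda>x. (g x)\<^sup>2)"
  shows "integrable M (\<lambda>x. (a * f x + b * g x)\<^sup>2)"
proof (rule Bochner_Integration.integrable_bound)
  show "integrable M (\<lambda>x. 2 * a\<^sup>2 * (f x)\<^sup>2 + 2 * b\<^sup>2 * (g x)\<^sup>2)"
    using assms(3,4) by auto
  show "(\<lambda>x. (a * f x + b * g x)\<^sup>2) \<in> borel_measurable M" by measurable
  have "(a * f x + b * g x)\<^sup>2 \<le> 2 * a\<^sup>2 * (f x)\<^sup>2 + 2 * b\<^sup>2 * (g x)\<^sup>2" for x
  proof -
    have "0 \<le> (a * f x - b * g x)\<^sup>2" by simp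
    then show ?thesis by (simp add: power2_eq_square algebra_simps)
  qed
  then show "AE x in M. norm ((a * f x + b * g x)\<^sup>2) \<le> norm (2 * a\<^sup>2 * (f x)\<^sup>2 + 2 * b\<^sup>2 * (g x)\<^sup>2)"
    by (auto intro!: AE_I2)
qed

lemma CS_real:
  fixes f g :: "'a \<Rightarrow> real"
  assumes [measurable]: "f \<in> borel_measurable M" "g \<in> borel_measurable M"
    and fi: "integrable M (\<lambda>x. (f x)\<^sup>2)" and gi: "integrable M (\<lambda>x. (g x)\<^sup>2)"
  shows "integrable M (\<lambda>x. f x * g x)"
    and "(\<integral>x. \<bar>f x * g x\<bar> \<partial>M) \<le> sqrt (\<integral>x. (f x)\<^sup>2 \<partial>M) * sqrt (\<integral>x. (g x)\<^sup>2 \<partial>M)"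
proof -
  have b: "\<bar>f x * g x\<bar> \<le> (f x)\<^sup>2 + (g x)\<^sup>2" for x
  proof -
    have "0 \<le> (\<bar>f x\<bar> - \<bar>g x\<bar>)\<^sup>2" by simp
    then have "2 * \<bar>f x\<bar> * \<bar>g x\<bar> \<le> (f x)\<^sup>2 + (g x)\<^sup>2"
      by (simp add: power2_eq_square algebra_simps abs_mult_self_eq)
    moreover have "0 \<le> \<bar>f x\<bar> * \<bar>g x\<bar>" by simp
    ultimately show ?thesis by (simp only: abs_mult)
  qed
  show int: "integrable M (\<lambda>x. f x * g x)"
    by (rule Bochner_Integration.integrable_bound[where f="\<lambda>x. (f x)\<^sup>2 + (g x)\<^sup>2"])
       (use fi gi b in auto)
  have "(\<integral>\<^sup>+x. ennreal \<bar>f x\<bar> * ennreal \<bar>g x\<bar> \<partial>M)\<^sup>2 \<le>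
        (\<integral>\<^sup>+x. ennreal \<bar>f x\<bar> ^ 2 \<partial>M) * (\<integral>\<^sup>+x. ennreal \<bar>g x\<bar> ^ 2 \<partial>M)"
    by (rule Cauchy_Schwarz_nn_integral) auto
  moreover have "(\<integral>\<^sup>+x. ennreal \<bar>f x\<bar> * ennreal \<bar>g x\<bar> \<partial>M) = ennreal (\<integral>x. \<bar>f x * g x\<bar> \<partial>M)"
    using integrable_abs[OF int]
    by (subst nn_integral_eq_integral[symmetric]) (auto simp: ennreal_mult' abs_mult)
  moreover have "(\<integral>\<^sup>+x. ennreal \<bar>f x\<bar> ^ 2 \<partial>M) = ennreal (\<integral>x. (f x)\<^sup>2 \<partial>M)"
    by (subst nn_integral_eq_integral[symmetric]) (auto simp: ennreal_power fi)
  moreover have "(\<integral>\<^sup>+x. ennreal \<bar>g x\<bar> ^ 2 \<partial>M) = ennreal (\<integral>x. (g x)\<^sup>2 \<partial>M)"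
    by (subst nn_integral_eq_integral[symmetric]) (auto simp: ennreal_power gi)
  ultimately have "ennreal ((\<integral>x. \<bar>f x * g x\<bar> \<partial>M)\<^sup>2) \<le> ennreal ((\<integral>x. (f x)\<^sup>2 \<partial>M) * (\<integral>x. (g x)\<^sup>2 \<partial>M))"
    by (simp add: ennreal_power ennreal_mult integral_nonneg_AE)
  then have "(\<integral>x. \<bar>f x * g x\<bar> \<partial>M)\<^sup>2 \<le> (\<integral>x. (f x)\<^sup>2 \<partial>M) * (\<integral>x. (g x)\<^sup>2 \<partial>M)"
    by (subst (asm) ennreal_le_iff) (auto simp: integral_nonneg_AE)
  then have "sqrt ((\<integral>x. \<bar>f x * g x\<bar> \<partial>M)\<^sup>2) \<le> sqrt ((\<integral>x. (f x)\<^sup>2 \<partial>M) * (\<integral>x. (g x)\<^sup>2 \<partial>M))"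
    using real_sqrt_le_mono by blast
  then show "(\<integral>x. \<bar>f x * g x\<bar> \<partial>M) \<le> sqrt (\<integral>x. (f x)\<^sup>2 \<partial>M) * sqrt (\<integral>x. (g x)\<^sup>2 \<partial>M)"
    by (simp add: integral_nonneg_AE real_sqrt_mult)
qed

lemma aux_sq: "ennreal (norm ((t::real)\<^sup>2)) = ennreal \<bar>t\<bar> ^ 2"
  by (subst ennreal_power) auto

lemma rabs_suminf_bound:
  fixes u b :: "nat \<Rightarrow> real"
  assumes "\<And>i. \<bar>u i\<bar> \<le> b i" "summable b"
  shows "\<bar>\<Sum>i. u i\<bar> \<le> (\<Sum>i. b i)"
proof -
  have su: "summable (\<lambda>i. \<bar>u i\<bar>)"
    by (rule summable_comparison_test'[OF assms(2)]) (use assms(1) in auto)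
  have "\<bar>\<Sum>i. u i\<bar> \<le> (\<Sum>i. \<bar>u i\<bar>)" by (rule summable_rabs[OF su])
  also have "\<dots> \<le> (\<Sum>i. b i)" by (rule suminf_le[OF assms(1) su assms(2)])
  finally show ?thesis .
qed

lemma series_L2:
  fixes y :: "nat \<Rightarrow> 'a \<Rightarrow> real" and a :: "nat \<Rightarrow> real"
  assumes ym[measurable]: "\<And>i. y i \<in> borel_measurable M"
    and yi: "\<And>i. integrable M (\<lambda>x. (y i x)\<^sup>2)"
    and a: "\<And>i. 0 \<le> a i"
    and sm: "summable (\<lambda>i. a i * sqrt (\<integral>x. (y i x)\<^sup>2 \<partial>M))"
  shows "AE x in M. summable (\<lambda>i. \<bar>a i * y i x\<bar>)"
    and "integrable M (\<lambda>x. (\<Sum>i. a i * y i x)\<^sup>2)"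
    and "\<And>h. h \<in> borel_measurable M \<Longrightarrow> integrable M (\<lambda>x. (h x)\<^sup>2) \<Longrightarrow>
          (\<integral>x. h x * (\<Sum>i. a i * y i x) \<partial>M) = (\<Sum>i. a i * (\<integral>x. h x * y i x \<partial>M))"
proof -
  define s where "s i = sqrt (\<integral>x. (y i x)\<^sup>2 \<partial>M)" for i
  define c where "c i = a i * s i" for i
  have s0: "0 \<le> s i" for i unfolding s_def by (simp add: integral_nonneg_AE)
  have c0: "0 \<le> c i" for i unfolding c_def using a s0 by simp
  have csum: "summable c" using sm unfolding c_def s_def .
  define H where "H x = (\<Sum>i. ennreal (a i * \<bar>y i x\<bar>))" for x
  have Hm[measurable]: "H \<in> borel_measurable M" unfolding H_def by measurable
  have Hsq: "H x ^ 2 = (\<Sum>i. \<Sum>j. ennreal (a i * \<bar>y i x\<bar>) * ennreal (a j * \<bar>y j x\<bar>))" for x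
    by (simp add: power2_eq_square H_def)
  have pair: "(\<integral>\<^sup>+x. ennreal (a i * \<bar>y i x\<bar>) * ennreal (a j * \<bar>y j x\<bar>) \<partial>M) \<le> ennreal (c i) * ennreal (c j)" for i j
  proof -
    have int: "integrable M (\<lambda>x. y i x * y j x)" using CS_real(1)[OF ym ym yi yi] .
    have "(\<integral>\<^sup>+x. ennreal (a i * \<bar>y i x\<bar>) * ennreal (a j * \<bar>y j x\<bar>) \<partial>M)
        = (\<integral>\<^sup>+x. ennreal (a i * a j * \<bar>y i x * y j x\<bar>) \<partial>M)"
      using a by (intro nn_integral_cong) (simp add: ennreal_mult'[symmetric] abs_mult mult_ac)
    also have "\<dots> = ennreal (\<integral>x. a i * a j * \<bar>y i x * y j x\<bar> \<partial>M)"
      using int a by (intro nn_integral_eq_integral) auto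
    also have "\<dots> = ennreal (a i * a j * (\<integral>x. \<bar>y i x * y j x\<bar> \<partial>M))" by simp
    also have "\<dots> \<le> ennreal (a i * a j * (s i * s j))"
      using CS_real(2)[OF ym ym yi yi, of i j] a unfolding s_def
      by (intro ennreal_leI mult_left_mono) auto
    also have "\<dots> = ennreal (c i) * ennreal (c j)"
      using c0 by (simp add: ennreal_mult'[symmetric] c_def mult_ac)
    finally show ?thesis .
  qed
  have "(\<integral>\<^sup>+x. H x ^ 2 \<partial>M) = (\<Sum>i. \<Sum>j. \<integral>\<^sup>+x. ennreal (a i * \<bar>y i x\<bar>) * ennreal (a j * \<bar>y j x\<bar>) \<partial>M)"
    unfolding Hsq
    apply (subst nn_integral_suminf, measurable)
    apply (rule suminf_cong)
    apply (subst nn_integral_suminf[symmetric], measurable)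
    done
  also have "\<dots> \<le> (\<Sum>i. \<Sum>j. ennreal (c i) * ennreal (c j))"
    by (intro suminf_le summableI pair allI)
  also have "\<dots> = ennreal (\<Sum>i. c i) * ennreal (\<Sum>i. c i)"
    using suminf_ennreal2[OF c0 csum] by simp
  finally have Hfin: "(\<integral>\<^sup>+x. H x ^ 2 \<partial>M) < \<infinity>"
    by (rule le_less_trans) (simp add: ennreal_mult_less_top)
  have AEH: "AE x in M. H x \<noteq> \<infinity>"
  proof -
    have "AE x in M. H x ^ 2 \<noteq> \<infinity>" using Hfin by (intro nn_integral_PInf_AE) auto
    then show ?thesis by eventually_elim (auto simp: power2_eq_square ennreal_mult_eq_top_iff)
  qed
  show AEs: "AE x in M. summable (\<lambda>i. \<bar>a i * y i x\<bar>)"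
    using AEH
  proof (eventually_elim)
    case (elim x)
    then show ?case using a
      by (intro summable_suminf_not_top) (auto simp: H_def abs_mult)
  qed
  show "integrable M (\<lambda>x. (\<Sum>i. a i * y i x)\<^sup>2)"
  proof (rule integrableI_bounded)
    show "(\<lambda>x. (\<Sum>i. a i * y i x)\<^sup>2) \<in> borel_measurable M" by measurable
    have "AE x in M. ennreal (norm ((\<Sum>i. a i * y i x)\<^sup>2)) \<le> H x ^ 2"
      using AEs
    proof (eventually_elim)
      case (elim x)
      have "\<bar>\<Sum>i. a i * y i x\<bar> \<le> (\<Sum>i. \<bar>a i * y i x\<bar>)" using summable_rabs[OF elim] .
      also have "ennreal (\<Sum>i. \<bar>a i * y i x\<bar>) = H x"
        unfolding H_def using a by (subst suminf_ennreal2[OF _ elim, symmetric]) (auto simp: abs_mult)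
      ultimately have "ennreal \<bar>\<Sum>i. a i * y i x\<bar> \<le> H x" by (metis ennreal_leI)
      then have "ennreal \<bar>\<Sum>i. a i * y i x\<bar> ^ 2 \<le> H x ^ 2" by (rule power_mono) simp
      moreover have "ennreal (norm ((\<Sum>i. a i * y i x)\<^sup>2)) = ennreal \<bar>\<Sum>i. a i * y i x\<bar> ^ 2"
        by (rule aux_sq)
      ultimately show ?case by (rule ord_eq_le_trans[rotated])
    qed
    then have "(\<integral>\<^sup>+x. ennreal (norm ((\<Sum>i. a i * y i x)\<^sup>2)) \<partial>M) \<le> (\<integral>\<^sup>+x. H x ^ 2 \<partial>M)"
      by (rule nn_integral_mono_AE)
    then show "(\<integral>\<^sup>+x. ennreal (norm ((\<Sum>i. a i * y i x)\<^sup>2)) \<partial>M) < \<infinity>"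
      using Hfin by (rule le_less_trans)
  qed
  fix h :: "'a \<Rightarrow> real"
  assume hm[measurable]: "h \<in> borel_measurable M" and hi: "integrable M (\<lambda>x. (h x)\<^sup>2)"
  define sh where "sh = sqrt (\<integral>x. (h x)\<^sup>2 \<partial>M)"
  have "(\<integral>x. h x * (\<Sum>i. a i * y i x) \<partial>M) = (\<integral>x. (\<Sum>i. h x * (a i * y i x)) \<partial>M)"
    using AEs
  proof (intro integral_cong_AE)
    show "AE x in M. h x * (\<Sum>i. a i * y i x) = (\<Sum>i. h x * (a i * y i x))"
      using AEs
    proof eventually_elim
      case (elim x)
      have "summable (\<lambda>i. a i * y i x)" by (rule summable_rabs_cancel[OF elim])
      then show ?case by (rule suminf_mult[symmetric])
    qed
  qed measurable
  also have "\<dots> = (\<Sum>i. (\<integral>x. h x * (a i * y i x) \<partial>M))"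
  proof (rule integral_suminf)
    show "integrable M (\<lambda>x. h x * (a i * y i x))" for i
      using CS_real(1)[OF hm ym hi yi, of i] by (simp add: mult.left_commute)
    show "AE x in M. summable (\<lambda>i. norm (h x * (a i * y i x)))"
      using AEs
    proof eventually_elim
      case (elim x)
      show ?case using summable_mult[OF elim, of "\<bar>h x\<bar>"] by (simp only: real_norm_def abs_mult)
    qed
    show "summable (\<lambda>i. \<integral>x. norm (h x * (a i * y i x)) \<partial>M)"
    proof (rule summable_comparison_test')
      show "summable (\<lambda>i. sh * c i)" using csum by (rule summable_mult)
      fix i :: nat
      have "norm (\<integral>x. norm (h x * (a i * y i x)) \<partial>M) = a i * (\<integral>x. \<bar>h x * y i x\<bar> \<partial>M)"
        using a by (simp add: abs_mult integral_nonneg_AE mult.left_commute)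
      also have "\<dots> \<le> a i * (sh * s i)"
        using CS_real(2)[OF hm ym hi yi, of i] a unfolding sh_def s_def by (intro mult_left_mono) auto
      finally show "norm (\<integral>x. norm (h x * (a i * y i x)) \<partial>M) \<le> sh * c i"
        by (simp add: c_def mult_ac)
    qed
  qed
  also have "\<dots> = (\<Sum>i. a i * (\<integral>x. h x * y i x \<partial>M))"
    by (simp add: mult.left_commute)
  finally show "(\<integral>x. h x * (\<Sum>i. a i * y i x) \<partial>M) = (\<Sum>i. a i * (\<integral>x. h x * y i x \<partial>M))" .
qed

lemma weak_bounded:
  fixes x :: "nat \<Rightarrow> 'a \<Rightarrow> real"
  assumes xm[measurable]: "\<And>n. x n \<in> borel_measurable M"
    and xi: "\<And>n. integrable M (\<lambda>\<omega>. (x n \<omega>)\<^sup>2)"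
    and weak: "\<And>g. g \<in> borel_measurable M \<Longrightarrow> integrable M (\<lambda>\<omega>. (g \<omega>)\<^sup>2) \<Longrightarrow>
                 (\<lambda>n. \<integral>\<omega>. x n \<omega> * g \<omega> \<partial>M) \<longlonglongrightarrow> 0"
  shows "\<exists>C. \<forall>n. (\<integral>\<omega>. (x n \<omega>)\<^sup>2 \<partial>M) \<le> C"
proof (rule ccontr)
  assume nb: "\<not> ?thesis"
  define N where "N n = (\<integral>\<omega>. (x n \<omega>)\<^sup>2 \<partial>M)" for n
  have N0: "0 \<le> N n" for n unfolding N_def by (simp add: integral_nonneg_AE)
  have unb: "\<exists>n\<ge>T. C < N n" for C T
  proof (rule ccontr)
    assume "\<not> (\<exists>n\<ge>T. C < N n)"
    then have le: "\<forall>n\<ge>T. N n \<le> C" by auto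
    have "\<forall>n. N n \<le> max C (Max (N ` {..T}))"
    proof
      fix n show "N n \<le> max C (Max (N ` {..T}))"
      proof (cases "T \<le> n")
        case True then show ?thesis using le by auto
      next
        case False then have "N n \<le> Max (N ` {..T})" by (intro Max_ge) auto
        then show ?thesis by auto
      qed
    qed
    with nb show False unfolding N_def by blast
  qed
  define L2 where "L2 G \<longleftrightarrow> G \<in> borel_measurable M \<and> integrable M (\<lambda>\<omega>. (G \<omega>)\<^sup>2)" for G :: "'a \<Rightarrow> real"
  define P where "P k p \<longleftrightarrow> L2 (snd p) \<and> 4 * 3^k \<le> sqrt (N (fst p)) \<and>
      \<bar>\<integral>\<omega>. x (fst p) \<omega> * snd p \<omega> \<partial>M\<bar> \<le> 1 \<and> (k = 0 \<longrightarrow> snd p = (\<lambda>_. 0))"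
    for k :: nat and p :: "nat \<times> ('a \<Rightarrow> real)"
  define Q where "Q k p p' \<longleftrightarrow> fst p < fst p' \<and>
      snd p' = (\<lambda>\<omega>. snd p \<omega> + 1 / (3^k * sqrt (N (fst p))) * x (fst p) \<omega>)"
    for k :: nat and p p' :: "nat \<times> ('a \<Rightarrow> real)"
  have sqrt_big: "c \<le> sqrt (N m)" if "c\<^sup>2 < N m" "0 \<le> c" for c m
    using that real_le_rsqrt by fastforce
  have P0: "\<exists>p. P 0 p"
  proof -
    obtain m where "(4::real)\<^sup>2 < N m" using unb[where C="4\<^sup>2" and T=0] by blast
    then have "4 \<le> sqrt (N m)" by (intro sqrt_big) auto
    then show ?thesis by (intro exI[of _ "(m, \<lambda>_. 0)"]) (auto simp: P_def L2_def)
  qed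
  have step: "\<exists>p'. P (Suc k) p' \<and> Q k p p'" if Pk: "P k p" for k p
  proof -
    obtain m G where p: "p = (m, G)" by (cases p)
    define G' where "G' = (\<lambda>\<omega>. G \<omega> + 1 / (3^k * sqrt (N m)) * x m \<omega>)"
    have LG: "L2 G" using Pk by (simp add: P_def p)
    then have [measurable]: "G \<in> borel_measurable M" unfolding L2_def by simp
    have G'm[measurable]: "G' \<in> borel_measurable M" unfolding G'_def by measurable
    have "integrable M (\<lambda>\<omega>. (1 * G \<omega> + 1 / (3^k * sqrt (N m)) * x m \<omega>)\<^sup>2)"
      using LG xi unfolding L2_def by (intro L2_lin) auto
    then have LG': "L2 G'" unfolding L2_def G'_def by simp
    have "\<forall>\<^sub>F n in sequentially. \<bar>\<integral>\<omega>. x n \<omega> * G' \<omega> \<partial>M\<bar> < 1"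
    proof -
      have lim1: "(\<lambda>n. \<integral>\<omega>. x n \<omega> * G' \<omega> \<partial>M) \<longlonglongrightarrow> 0"
        using weak[OF G'm] LG' unfolding L2_def by simp
      show ?thesis using order_tendstoD(2)[OF tendsto_rabs[OF lim1], of 1] by simp
    qed
    then obtain T where T: "\<And>n. n \<ge> T \<Longrightarrow> \<bar>\<integral>\<omega>. x n \<omega> * G' \<omega> \<partial>M\<bar> < 1"
      by (auto simp: eventually_sequentially)
    obtain n where n: "n \<ge> max T (Suc m)" "(4 * 3^Suc k)\<^sup>2 < N n"
      using unb by blast
    have "4 * 3^Suc k \<le> sqrt (N n)" using n by (intro sqrt_big) auto
    moreover have "\<bar>\<integral>\<omega>. x n \<omega> * G' \<omega> \<partial>M\<bar> \<le> 1" using T[of n] n by auto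
    ultimately have "P (Suc k) (n, G')" using LG' by (simp add: P_def)
    moreover have "Q k p (n, G')" using n by (simp add: Q_def p G'_def)
    ultimately show ?thesis by blast
  qed
  obtain f where f: "\<And>k. P k (f k) \<and> Q k (f k) (f (Suc k))"
    using dependent_nat_choice[of P Q, OF P0 step] by blast
  define n where "n k = fst (f k)" for k
  define G where "G k = snd (f k)" for k
  define s where "s k = sqrt (N (n k))" for k
  define a where "a k = 1 / (3^k * s k)" for k
  define y where "y k = x (n k)" for k
  have ym[measurable]: "y k \<in> borel_measurable M" for k unfolding y_def by simp
  have yi: "integrable M (\<lambda>\<omega>. (y k \<omega>)\<^sup>2)" for k unfolding y_def by (rule xi)
  have sbig: "4 * 3^k \<le> s k" for k using f[of k] by (simp add: P_def s_def n_def)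
  have spos: "0 < s k" for k using sbig[of k] by (smt (verit) zero_less_power)
  have a0: "0 \<le> a k" for k using spos[of k] by (simp add: a_def)
  have as: "a k * s k = (1/3)^k" for k using spos[of k] by (simp add: a_def power_one_over)
  have sy: "sqrt (\<integral>\<omega>. (y k \<omega>)\<^sup>2 \<partial>M) = s k" for k by (simp add: s_def y_def N_def)
  have Gk: "G k = (\<lambda>\<omega>. \<Sum>i<k. a i * y i \<omega>)" for k
  proof (induction k)
    case 0 then show ?case using f[of 0] by (simp add: P_def G_def)
  next
    case (Suc k)
    have "G (Suc k) = (\<lambda>\<omega>. G k \<omega> + a k * y k \<omega>)"
      using f[of k] by (simp add: Q_def G_def a_def s_def y_def n_def)
    then show ?case using Suc by simp
  qed
  have smono: "strict_mono n"
    using f by (intro strict_monoI_Suc) (simp add: Q_def n_def)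
  have summ: "summable (\<lambda>i. a i * sqrt (\<integral>\<omega>. (y i \<omega>)\<^sup>2 \<partial>M))"
    by (simp add: sy as summable_geometric)
  define g where "g \<omega> = (\<Sum>i. a i * y i \<omega>)" for \<omega>
  have gm[measurable]: "g \<in> borel_measurable M" unfolding g_def by measurable
  have gi: "integrable M (\<lambda>\<omega>. (g \<omega>)\<^sup>2)"
    unfolding g_def by (rule series_L2(2)[OF ym yi a0 summ])
  have gint: "(\<integral>\<omega>. y j \<omega> * g \<omega> \<partial>M) = (\<Sum>i. a i * (\<integral>\<omega>. y j \<omega> * y i \<omega> \<partial>M))" for j
    unfolding g_def by (rule series_L2(3)[OF ym yi a0 summ ym yi])
  have lim: "(\<lambda>j. \<integral>\<omega>. y j \<omega> * g \<omega> \<partial>M) \<longlonglongrightarrow> 0"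
    using LIMSEQ_subseq_LIMSEQ[OF weak[OF gm gi] smono] by (simp add: o_def y_def)
  have big: "1 \<le> \<bar>\<integral>\<omega>. y j \<omega> * g \<omega> \<partial>M\<bar>" for j
  proof -
    define t where "t i = a i * (\<integral>\<omega>. y j \<omega> * y i \<omega> \<partial>M)" for i
    have tb: "\<bar>t i\<bar> \<le> s j * (1/3)^i" for i
    proof -
      have "\<bar>\<integral>\<omega>. y j \<omega> * y i \<omega> \<partial>M\<bar> \<le> (\<integral>\<omega>. \<bar>y j \<omega> * y i \<omega>\<bar> \<partial>M)"
        by (rule integral_abs_bound)
      also have "\<dots> \<le> s j * s i" using CS_real(2)[OF ym ym yi yi, of j i] by (simp add: sy)
      finally have "\<bar>t i\<bar> \<le> a i * (s j * s i)" unfolding t_def using a0[of i]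
        by (simp add: abs_mult mult_left_mono)
      moreover have "a i * (s j * s i) = s j * (a i * s i)" by (simp add: mult_ac)
      ultimately show ?thesis using as[of i] by simp
    qed
    have sumt: "summable t"
      by (rule summable_comparison_test'[where g="\<lambda>i. s j * (1/3)^i"])
         (use tb in \<open>auto intro!: summable_mult summable_geometric\<close>)
    have split: "(\<Sum>i. t i) = (\<Sum>i. t (i + Suc j)) + (\<Sum>i<j. t i) + t j"
      using suminf_split_initial_segment[OF sumt, of "Suc j"] by simp
    have tailb: "\<bar>\<Sum>i. t (i + Suc j)\<bar> \<le> s j / (2 * 3^j)"
    proof -
      have sg: "summable (\<lambda>i. s j * (1/3)^Suc j * (1/3)^i)"
        by (intro summable_mult summable_geometric) auto
      have "\<bar>t (i + Suc j)\<bar> \<le> s j * (1/3)^Suc j * (1/3)^i" for i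
        using tb[of "i + Suc j"] by (simp add: power_add mult_ac)
      then have "\<bar>\<Sum>i. t (i + Suc j)\<bar> \<le> (\<Sum>i. s j * (1/3)^Suc j * (1/3)^i)"
        by (rule rabs_suminf_bound[OF _ sg])
      also have "\<dots> = s j * (1/3)^Suc j * (3/2)"
        by (subst suminf_mult) (auto simp: suminf_geometric)
      also have "\<dots> = s j / (2 * 3^j)" by (simp add: power_one_over)
      finally show ?thesis .
    qed
    have headb: "\<bar>\<Sum>i<j. t i\<bar> \<le> 1"
    proof -
      have "(\<Sum>i<j. t i) = (\<integral>\<omega>. (\<Sum>i<j. a i * (y j \<omega> * y i \<omega>)) \<partial>M)"
      proof -
        have "(\<integral>\<omega>. (\<Sum>i<j. a i * (y j \<omega> * y i \<omega>)) \<partial>M) = (\<Sum>i<j. \<integral>\<omega>. a i * (y j \<omega> * y i \<omega>) \<partial>M)"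
          by (rule Bochner_Integration.integral_sum) (use CS_real(1)[OF ym ym yi yi] in auto)
        then show ?thesis by (simp add: t_def)
      qed
      also have "\<dots> = (\<integral>\<omega>. x (n j) \<omega> * G j \<omega> \<partial>M)"
        by (simp add: Gk sum_distrib_left y_def mult_ac)
      finally show ?thesis using f[of j] by (simp add: P_def G_def n_def)
    qed
    have tj: "t j = s j / 3^j"
    proof -
      have "(\<integral>\<omega>. y j \<omega> * y j \<omega> \<partial>M) = (s j)\<^sup>2"
        using N0[of "n j"] by (simp add: s_def y_def N_def power2_eq_square)
      then show ?thesis using spos[of j] by (simp add: t_def a_def power2_eq_square)
    qed
    have "s j / 3^j - s j / (2 * 3^j) - 1 \<le> \<bar>\<Sum>i. t i\<bar>"
      using split tailb headb tj by linarith
    moreover have "s j / 3^j - s j / (2 * 3^j) = s j / (2 * 3^j)" by (simp add: field_simps)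
    moreover have "2 \<le> s j / (2 * 3^j)" using sbig[of j] by (simp add: field_simps)
    ultimately show ?thesis using gint[of j] by (simp add: t_def)
  qed
  have "\<forall>\<^sub>F j in sequentially. \<bar>\<integral>\<omega>. y j \<omega> * g \<omega> \<partial>M\<bar> < 1"
    using order_tendstoD(2)[OF tendsto_rabs[OF lim], of 1] by simp
  then obtain j where "\<bar>\<integral>\<omega>. y j \<omega> * g \<omega> \<partial>M\<bar> < 1" by (auto simp: eventually_sequentially)
  with big[of j] show False by simp
qed

lemma filter_bounded:
  fixes z :: "real \<Rightarrow> 'a \<Rightarrow> real"
  assumes zm: "\<And>\<eta>. \<eta> > 0 \<Longrightarrow> z \<eta> \<in> borel_measurable M"
    and zi: "\<And>\<eta>. \<eta> > 0 \<Longrightarrow> integrable M (\<lambda>\<omega>. (z \<eta> \<omega>)\<^sup>2)"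
    and weak: "\<And>g. g \<in> borel_measurable M \<Longrightarrow> integrable M (\<lambda>\<omega>. (g \<omega>)\<^sup>2) \<Longrightarrow>
       ((\<lambda>\<eta>. (\<integral>\<omega>. z \<eta> \<omega> * g \<omega> \<partial>M) / \<eta>\<^sup>2) \<longlongrightarrow> 0) (at_right 0)"
  shows "\<exists>C\<ge>0. \<forall>\<^sub>F \<eta> in at_right 0. (\<integral>\<omega>. (z \<eta> \<omega>)\<^sup>2 \<partial>M) \<le> C * \<eta>^4"
proof (rule ccontr)
  assume nb: "\<not> ?thesis"
  have "\<forall>k::nat. \<exists>\<eta>. 0 < \<eta> \<and> \<eta> < inverse (real (Suc k)) \<and> \<not> ((\<integral>\<omega>. (z \<eta> \<omega>)\<^sup>2 \<partial>M) \<le> real k * \<eta>^4)"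
  proof
    fix k :: nat
    have "\<not> (\<forall>\<^sub>F \<eta> in at_right 0. (\<integral>\<omega>. (z \<eta> \<omega>)\<^sup>2 \<partial>M) \<le> real k * \<eta>^4)"
      using nb by auto
    then have "\<not> (\<forall>y>0. y < inverse (real (Suc k)) \<longrightarrow> (\<integral>\<omega>. (z y \<omega>)\<^sup>2 \<partial>M) \<le> real k * y^4)"
      unfolding eventually_at_right_field by (metis inverse_positive_iff_positive of_nat_0_less_iff zero_less_Suc)
    then show "\<exists>\<eta>. 0 < \<eta> \<and> \<eta> < inverse (real (Suc k)) \<and> \<not> ((\<integral>\<omega>. (z \<eta> \<omega>)\<^sup>2 \<partial>M) \<le> real k * \<eta>^4)"
      by blast
  qed
  then obtain e where e: "\<And>k. 0 < e k" "\<And>k. e k < inverse (real (Suc k))"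
    "\<And>k. \<not> ((\<integral>\<omega>. (z (e k) \<omega>)\<^sup>2 \<partial>M) \<le> real k * (e k)^4)"
    by metis
  have "e \<longlonglongrightarrow> 0"
    by (rule tendsto_sandwich[OF _ _ tendsto_const LIMSEQ_inverse_real_of_nat])
       (use e in \<open>auto intro!: always_eventually less_imp_le\<close>)
  then have efl: "filterlim e (at_right 0) sequentially"
    by (rule tendsto_imp_filterlim_at_right) (use e in auto)
  define x where "x k \<omega> = z (e k) \<omega> / (e k)\<^sup>2" for k \<omega>
  have xm: "x k \<in> borel_measurable M" for k unfolding x_def using zm[OF e(1)] by measurable
  have xsq: "(x k \<omega>)\<^sup>2 = (z (e k) \<omega>)\<^sup>2 / (e k)^4" for k \<omega>
    by (simp add: x_def power_divide power_mult[symmetric])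
  have xi: "integrable M (\<lambda>\<omega>. (x k \<omega>)\<^sup>2)" for k
    unfolding xsq using zi[OF e(1)] by auto
  have "\<exists>C. \<forall>k. (\<integral>\<omega>. (x k \<omega>)\<^sup>2 \<partial>M) \<le> C"
  proof (rule weak_bounded[OF xm xi])
    fix g :: "'a \<Rightarrow> real" assume g: "g \<in> borel_measurable M" "integrable M (\<lambda>\<omega>. (g \<omega>)\<^sup>2)"
    have "((\<lambda>k. (\<integral>\<omega>. z (e k) \<omega> * g \<omega> \<partial>M) / (e k)\<^sup>2) \<longlongrightarrow> 0) sequentially"
      using filterlim_compose[OF weak[OF g] efl] by (simp add: o_def)
    moreover have "(\<integral>\<omega>. x k \<omega> * g \<omega> \<partial>M) = (\<integral>\<omega>. z (e k) \<omega> * g \<omega> \<partial>M) / (e k)\<^sup>2" for k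
      by (simp add: x_def)
    ultimately show "(\<lambda>k. \<integral>\<omega>. x k \<omega> * g \<omega> \<partial>M) \<longlonglongrightarrow> 0" by simp
  qed
  then obtain C where C: "\<And>k. (\<integral>\<omega>. (x k \<omega>)\<^sup>2 \<partial>M) \<le> C" by blast
  obtain k :: nat where k: "C < real k" using reals_Archimedean2 by blast
  have "real k * (e k)^4 < (\<integral>\<omega>. (z (e k) \<omega>)\<^sup>2 \<partial>M)" using e(3)[of k] by simp
  then have "real k < (\<integral>\<omega>. (z (e k) \<omega>)\<^sup>2 \<partial>M) / (e k)^4"
    using e(1)[of k] by (simp add: field_simps)
  also have "\<dots> = (\<integral>\<omega>. (x k \<omega>)\<^sup>2 \<partial>M)" unfolding xsq by simp
  finally show False using C[of k] k by simp
qed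

lemma taylor3:
  fixes \<phi> :: "real \<Rightarrow> real" and M :: real
  assumes sm: "smooth_fun \<phi>"
  shows "\<exists>K\<ge>0. \<forall>y. \<bar>y\<bar> \<le> M \<longrightarrow>
    \<bar>\<phi> y - \<phi> 0 - deriv \<phi> 0 * y - (deriv ^^ 2) \<phi> 0 / 2 * y\<^sup>2\<bar> \<le> K * \<bar>y\<bar>^3"
proof -
  define d where "d m = (deriv ^^ m) \<phi>" for m
  have D: "\<forall>m x. DERIV (d m) x :> d (Suc m) x"
    using sm unfolding smooth_fun_def d_def by (auto simp: DERIV_deriv_iff_real_differentiable)
  have "continuous_on {-M..M} (d 3)"
    using D by (intro continuous_at_imp_continuous_on) (auto intro: DERIV_isCont)
  then have "compact (d 3 ` {-M..M})" by (rule compact_continuous_image) simp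
  then have "bounded (d 3 ` {-M..M})" by (rule compact_imp_bounded)
  then obtain K0 where "\<forall>x\<in>d 3 ` {-M..M}. norm x \<le> K0"
    unfolding Elementary_Metric_Spaces.bounded_iff by blast
  then have K0: "\<And>t. t \<in> {-M..M} \<Longrightarrow> \<bar>d 3 t\<bar> \<le> K0" by auto
  define K where "K = max K0 0 / 6"
  show ?thesis
  proof (intro exI[of _ K] conjI allI impI)
    show "0 \<le> K" unfolding K_def by simp
    fix y :: real assume y: "\<bar>y\<bar> \<le> M"
    obtain t where t: "\<bar>t\<bar> \<le> \<bar>y\<bar>" "\<phi> y = (\<Sum>m<3. (d m 0 / fact m) * y ^ m) + (d 3 t / fact 3) * y ^ 3"
      using Maclaurin_all_le[of d \<phi>, OF _ D, of y 3] by (auto simp: d_def)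
    have "t \<in> {-M..M}" using t(1) y by auto
    then have "\<bar>d 3 t\<bar> \<le> max K0 0" using K0[of t] by linarith
    have eq: "\<phi> y - \<phi> 0 - deriv \<phi> 0 * y - (deriv ^^ 2) \<phi> 0 / 2 * y\<^sup>2 = d 3 t / 6 * y ^ 3"
      using t(2) by (simp add: d_def eval_nat_numeral fact_numeral power2_eq_square)
    have "\<bar>d 3 t / 6 * y ^ 3\<bar> = \<bar>d 3 t\<bar> / 6 * \<bar>y\<bar>^3" by (simp add: abs_mult power_abs)
    also have "\<dots> \<le> max K0 0 / 6 * \<bar>y\<bar>^3"
      using \<open>\<bar>d 3 t\<bar> \<le> max K0 0\<close> by (intro mult_right_mono divide_right_mono) auto
    finally show "\<bar>\<phi> y - \<phi> 0 - deriv \<phi> 0 * y - (deriv ^^ 2) \<phi> 0 / 2 * y\<^sup>2\<bar> \<le> K * \<bar>y\<bar>^3"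
      unfolding eq K_def .
  qed
qed

lemma UI:
  fixes u :: "real \<Rightarrow> 'a \<Rightarrow> real" and f :: "'a \<Rightarrow> real" and F :: "real filter"
  assumes fin: "finite_measure M"
    and fm[measurable]: "f \<in> borel_measurable M" and fi: "integrable M f" and f0: "\<And>\<omega>. 0 \<le> f \<omega>"
    and um: "\<forall>\<^sub>F \<eta> in F. u \<eta> \<in> borel_measurable M \<and> (AE \<omega> in M. \<bar>u \<eta> \<omega>\<bar> \<le> Mb)"
    and lim: "((\<lambda>\<eta>. \<integral>\<omega>. \<bar>u \<eta> \<omega>\<bar> \<partial>M) \<longlongrightarrow> 0) F"
  shows "((\<lambda>\<eta>. \<integral>\<omega>. \<bar>u \<eta> \<omega>\<bar> * f \<omega> \<partial>M) \<longlongrightarrow> 0) F"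
proof -
  interpret finite_measure M by (rule fin)
  define Mb' where "Mb' = \<bar>Mb\<bar> + 1"
  have Mb'0: "0 < Mb'" unfolding Mb'_def by simp
  define s where "s k \<omega> = f \<omega> - min (f \<omega>) (real k)" for k :: nat and \<omega>
  have sm[measurable]: "s k \<in> borel_measurable M" for k unfolding s_def by measurable
  have s0: "0 \<le> s k \<omega>" for k \<omega> unfolding s_def by simp
  have si: "integrable M (s k)" for k
    by (rule Bochner_Integration.integrable_bound[OF fi sm]) (auto simp: s_def f0)
  have slim: "(\<lambda>k. integral\<^sup>L M (s k)) \<longlonglongrightarrow> integral\<^sup>L M (\<lambda>_. 0::real)"
  proof (rule integral_dominated_convergence[where w=f])
    show "AE \<omega> in M. (\<lambda>k. s k \<omega>) \<longlonglongrightarrow> 0"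
    proof (intro AE_I2)
      fix \<omega>
      obtain N :: nat where "f \<omega> \<le> real N" using real_arch_simple by blast
      then have "\<forall>k\<ge>N. s k \<omega> = 0"
        unfolding s_def by (auto simp: min_def)
      then show "(\<lambda>k. s k \<omega>) \<longlonglongrightarrow> 0"
        by (intro tendsto_eventually) (auto simp: eventually_sequentially)
    qed
    show "AE \<omega> in M. norm (s k \<omega>) \<le> f \<omega>" for k by (auto simp: s_def f0)
  qed (use fi in auto)
  then have slim': "(\<lambda>k. integral\<^sup>L M (s k)) \<longlonglongrightarrow> 0" by simp
  show ?thesis
  proof (rule tendstoI)
    fix e :: real assume e: "0 < e"
    have "\<forall>\<^sub>F k in sequentially. integral\<^sup>L M (s k) < e / (2 * Mb')"
      using order_tendstoD(2)[OF slim'] e Mb'0 by simp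
    then obtain k where k: "integral\<^sup>L M (s k) < e / (2 * Mb')" by (auto simp: eventually_sequentially)
    have "((\<lambda>\<eta>. real k * (\<integral>\<omega>. \<bar>u \<eta> \<omega>\<bar> \<partial>M)) \<longlongrightarrow> 0) F"
      using tendsto_mult_right_zero[OF lim] by simp
    then have ev: "\<forall>\<^sub>F \<eta> in F. real k * (\<integral>\<omega>. \<bar>u \<eta> \<omega>\<bar> \<partial>M) < e / 2"
      by (rule order_tendstoD(2)) (use e in simp)
    show "\<forall>\<^sub>F \<eta> in F. dist (\<integral>\<omega>. \<bar>u \<eta> \<omega>\<bar> * f \<omega> \<partial>M) 0 < e"
      using ev um
    proof eventually_elim
      case (elim \<eta>)
      then have [measurable]: "u \<eta> \<in> borel_measurable M" and ub: "AE \<omega> in M. \<bar>u \<eta> \<omega>\<bar> \<le> Mb" by auto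
      have ui: "integrable M (\<lambda>\<omega>. \<bar>u \<eta> \<omega>\<bar>)"
        by (rule integrable_const_bound[where B=Mb]) (use ub in auto)
      have ufi: "integrable M (\<lambda>\<omega>. \<bar>u \<eta> \<omega>\<bar> * f \<omega>)"
      proof (rule Bochner_Integration.integrable_bound[where f="\<lambda>\<omega>. Mb' * f \<omega>"])
        show "integrable M (\<lambda>\<omega>. Mb' * f \<omega>)" using fi by simp
        show "AE \<omega> in M. norm (\<bar>u \<eta> \<omega>\<bar> * f \<omega>) \<le> norm (Mb' * f \<omega>)"
          using ub
        proof eventually_elim
          case (elim \<omega>) then show ?case using f0[of \<omega>] Mb'0
            by (auto simp: abs_mult Mb'_def intro!: mult_right_mono)
        qed
      qed measurable
      have "(\<integral>\<omega>. \<bar>u \<eta> \<omega>\<bar> * f \<omega> \<partial>M) \<le> (\<integral>\<omega>. real k * \<bar>u \<eta> \<omega>\<bar> + Mb' * s k \<omega> \<partial>M)"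
      proof (rule integral_mono_AE[OF ufi])
        show "integrable M (\<lambda>\<omega>. real k * \<bar>u \<eta> \<omega>\<bar> + Mb' * s k \<omega>)" using ui si by auto
        show "AE \<omega> in M. \<bar>u \<eta> \<omega>\<bar> * f \<omega> \<le> real k * \<bar>u \<eta> \<omega>\<bar> + Mb' * s k \<omega>"
          using ub
        proof eventually_elim
          case (elim \<omega>)
          have "\<bar>u \<eta> \<omega>\<bar> * f \<omega> = \<bar>u \<eta> \<omega>\<bar> * min (f \<omega>) (real k) + \<bar>u \<eta> \<omega>\<bar> * s k \<omega>"
            by (simp add: s_def algebra_simps)
          also have "\<dots> \<le> real k * \<bar>u \<eta> \<omega>\<bar> + Mb' * s k \<omega>"
          proof (rule add_mono)
            show "\<bar>u \<eta> \<omega>\<bar> * min (f \<omega>) (real k) \<le> real k * \<bar>u \<eta> \<omega>\<bar>"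
              by (subst mult.commute) (intro mult_right_mono, auto)
            show "\<bar>u \<eta> \<omega>\<bar> * s k \<omega> \<le> Mb' * s k \<omega>"
              using elim s0[of k \<omega>] by (intro mult_right_mono) (auto simp: Mb'_def)
          qed
          finally show ?case .
        qed
      qed
      also have "\<dots> = real k * (\<integral>\<omega>. \<bar>u \<eta> \<omega>\<bar> \<partial>M) + Mb' * integral\<^sup>L M (s k)"
        using ui si by simp
      also have "\<dots> < e / 2 + Mb' * (e / (2 * Mb'))"
        using elim k Mb'0 by (intro add_less_le_mono mult_left_mono) auto
      also have "\<dots> = e" using Mb'0 by simp
      finally have "(\<integral>\<omega>. \<bar>u \<eta> \<omega>\<bar> * f \<omega> \<partial>M) < e" .
      moreover have "0 \<le> (\<integral>\<omega>. \<bar>u \<eta> \<omega>\<bar> * f \<omega> \<partial>M)" using f0 by (simp add: integral_nonneg_AE)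
      ultimately show ?case by simp
    qed
  qed
qed



lemma cube_bound:
  fixes b m e c :: real
  assumes "\<bar>b\<bar> \<le> m"
  shows "\<bar>b\<bar>^3 \<le> 2 * e\<^sup>2 * (\<bar>b\<bar> * c\<^sup>2) + 2 * \<bar>m\<bar> * (b - e * c)\<^sup>2"
proof -
  have h1: "b\<^sup>2 \<le> 2 * (b - e * c)\<^sup>2 + 2 * e\<^sup>2 * c\<^sup>2"
  proof -
    have "0 \<le> (b - 2 * e * c)\<^sup>2" by simp
    then show ?thesis by (simp add: power2_eq_square algebra_simps)
  qed
  have "\<bar>b\<bar>^3 = \<bar>b\<bar> * b\<^sup>2" by (simp add: power3_eq_cube power2_eq_square abs_mult_self_eq)
  also have "\<dots> \<le> \<bar>b\<bar> * (2 * (b - e * c)\<^sup>2 + 2 * e\<^sup>2 * c\<^sup>2)"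
    using h1 by (intro mult_left_mono) auto
  also have "\<dots> = 2 * e\<^sup>2 * (\<bar>b\<bar> * c\<^sup>2) + 2 * (\<bar>b\<bar> * (b - e * c)\<^sup>2)"
    by (simp add: algebra_simps)
  also have "\<dots> \<le> 2 * e\<^sup>2 * (\<bar>b\<bar> * c\<^sup>2) + 2 * (\<bar>m\<bar> * (b - e * c)\<^sup>2)"
    using assms by (intro add_left_mono mult_left_mono mult_right_mono) auto
  finally show ?thesis by simp
qed

theorem lemma20:
  fixes \<Omega> :: "'a measure"
    and B :: "real \<Rightarrow> 'a \<Rightarrow> real"
    and B0 R0 :: "'a \<Rightarrow> real"
    and M :: real
    and P1 P2 :: "(real \<Rightarrow> real) \<Rightarrow> real"
  assumes prob: "prob_space \<Omega>"
    and meas: "\<And>\<eta>. \<eta> > 0 \<Longrightarrow> B \<eta> \<in> borel_measurable \<Omega>"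
    and bound: "\<And>\<eta>. \<eta> > 0 \<Longrightarrow> AE \<omega> in \<Omega>. \<bar>B \<eta> \<omega>\<bar> \<le> M"
    and B0_L2: "B0 \<in> borel_measurable \<Omega>" "integrable \<Omega> (\<lambda>\<omega>. (B0 \<omega>)\<^sup>2)"
    and R0_L2: "R0 \<in> borel_measurable \<Omega>" "integrable \<Omega> (\<lambda>\<omega>. (R0 \<omega>)\<^sup>2)"
    and weak: "\<And>g. g \<in> borel_measurable \<Omega> \<Longrightarrow> integrable \<Omega> (\<lambda>\<omega>. (g \<omega>)\<^sup>2) \<Longrightarrow>
       ((\<lambda>\<eta>. (\<integral>\<omega>. (B \<eta> \<omega> - \<eta> * B0 \<omega> - \<eta>\<^sup>2 * R0 \<omega>) * g \<omega> \<partial>\<Omega>) / \<eta>\<^sup>2) \<longlongrightarrow> 0)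
         (at_right 0)"
    and P1: "compact_distribution P1"
    and P2: "compact_distribution P2"
    and law: "\<And>\<phi>. smooth_fun \<phi> \<Longrightarrow>
       ((\<lambda>\<eta>. ((\<integral>y. \<phi> y \<partial>(distr \<Omega> borel (B \<eta>))) - \<phi> 0 - \<eta> * P1 \<phi> - \<eta>\<^sup>2 * P2 \<phi>) / \<eta>\<^sup>2)
          \<longlongrightarrow> 0) (at_right 0)"
  shows "\<And>\<phi>. smooth_fun \<phi> \<Longrightarrow>
       ((\<lambda>\<eta>. ((\<integral>y. \<phi> y \<partial>(distr \<Omega> borel (B \<eta>)))
              - \<phi> 0
              - \<eta> * (\<integral>\<omega>. B0 \<omega> \<partial>\<Omega>) * deriv \<phi> 0
              - \<eta>\<^sup>2 / 2 * (\<integral>\<omega>. (B0 \<omega>)\<^sup>2 \<partial>\<Omega>) * (deriv ^^ 2) \<phi> 0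
              - \<eta>\<^sup>2 * (\<integral>\<omega>. R0 \<omega> \<partial>\<Omega>) * deriv \<phi> 0) / \<eta>\<^sup>2)
          \<longlongrightarrow> 0) (at_right 0)"
proof -
  fix \<phi> :: "real \<Rightarrow> real"
  assume sm: "smooth_fun \<phi>"
  interpret P: prob_space \<Omega> by (rule prob)
  note [measurable] = B0_L2(1) R0_L2(1)
  have B0i: "integrable \<Omega> B0" by (rule P.square_integrable_imp_integrable[OF B0_L2])
  have R0i: "integrable \<Omega> R0" by (rule P.square_integrable_imp_integrable[OF R0_L2])
  define c1 where "c1 = deriv \<phi> 0"
  define c2 where "c2 = (deriv ^^ 2) \<phi> 0"
  define z where "z \<eta> \<omega> = B \<eta> \<omega> - \<eta> * B0 \<omega> - \<eta>\<^sup>2 * R0 \<omega>" for \<eta> \<omega>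
  define w where "w \<eta> \<omega> = B \<eta> \<omega> - \<eta> * B0 \<omega>" for \<eta> \<omega>
  have Bi: "integrable \<Omega> (B \<eta>)" if "\<eta> > 0" for \<eta>
    using P.integrable_const_bound[OF _ meas[OF that], of M] bound[OF that] by simp
  have Bsq_b: "AE \<omega> in \<Omega>. norm ((B \<eta> \<omega>)\<^sup>2) \<le> M\<^sup>2" if "\<eta> > 0" for \<eta>
    using bound[OF that]
  proof eventually_elim
    case (elim \<omega>)
    then have "\<bar>B \<eta> \<omega>\<bar>\<^sup>2 \<le> M\<^sup>2" by (intro power_mono) auto
    then show ?case by simp
  qed
  have Bsqi: "integrable \<Omega> (\<lambda>\<omega>. (B \<eta> \<omega>)\<^sup>2)" if "\<eta> > 0" for \<eta>
    using meas[OF that] by (intro P.integrable_const_bound[OF Bsq_b[OF that]]) measurable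
  have wm: "w \<eta> \<in> borel_measurable \<Omega>" if "\<eta> > 0" for \<eta>
    unfolding w_def using meas[OF that] by measurable
  have zm: "z \<eta> \<in> borel_measurable \<Omega>" if "\<eta> > 0" for \<eta>
    unfolding z_def using meas[OF that] by measurable
  have wi: "integrable \<Omega> (\<lambda>\<omega>. (w \<eta> \<omega>)\<^sup>2)" if "\<eta> > 0" for \<eta>
    using L2_lin[OF meas[OF that] B0_L2(1) Bsqi[OF that] B0_L2(2), of 1 "-\<eta>"]
    by (simp add: w_def)
  have zi: "integrable \<Omega> (\<lambda>\<omega>. (z \<eta> \<omega>)\<^sup>2)" if "\<eta> > 0" for \<eta>
    using L2_lin[OF wm[OF that] R0_L2(1) wi[OF that] R0_L2(2), of 1 "-\<eta>\<^sup>2"]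
    by (simp add: w_def z_def)
  have weakz: "((\<lambda>\<eta>. (\<integral>\<omega>. z \<eta> \<omega> * g \<omega> \<partial>\<Omega>) / \<eta>\<^sup>2) \<longlongrightarrow> 0) (at_right 0)"
    if "g \<in> borel_measurable \<Omega>" "integrable \<Omega> (\<lambda>\<omega>. (g \<omega>)\<^sup>2)" for g
    unfolding z_def by (rule weak[OF that])
  obtain C where C0: "C \<ge> 0" and evC: "\<forall>\<^sub>F \<eta> in at_right 0. (\<integral>\<omega>. (z \<eta> \<omega>)\<^sup>2 \<partial>\<Omega>) \<le> C * \<eta>^4"
    using filter_bounded[OF zm zi weakz] by blast
  define D where "D = 2 * (\<integral>\<omega>. (R0 \<omega>)\<^sup>2 \<partial>\<Omega>) + 2 * C"
  have D0: "0 \<le> D" unfolding D_def using C0 by (simp add: integral_nonneg_AE)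
  have evpos: "\<forall>\<^sub>F \<eta> in at_right (0::real). 0 < \<eta>" by (rule eventually_at_right_less)
  have evw: "\<forall>\<^sub>F \<eta> in at_right 0. 0 < \<eta> \<and> (\<integral>\<omega>. (w \<eta> \<omega>)\<^sup>2 \<partial>\<Omega>) \<le> D * \<eta>^4"
    using evC evpos
  proof eventually_elim
    case (elim \<eta>)
    have "(\<integral>\<omega>. (w \<eta> \<omega>)\<^sup>2 \<partial>\<Omega>) \<le> (\<integral>\<omega>. 2 * (z \<eta> \<omega>)\<^sup>2 + 2 * \<eta>^4 * (R0 \<omega>)\<^sup>2 \<partial>\<Omega>)"
    proof (rule integral_mono)
      show "integrable \<Omega> (\<lambda>\<omega>. (w \<eta> \<omega>)\<^sup>2)" using wi elim by simp
      show "integrable \<Omega> (\<lambda>\<omega>. 2 * (z \<eta> \<omega>)\<^sup>2 + 2 * \<eta>^4 * (R0 \<omega>)\<^sup>2)"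
        using zi[of \<eta>] elim R0_L2(2) by auto
      fix \<omega>
      have e1: "w \<eta> \<omega> = z \<eta> \<omega> + \<eta>\<^sup>2 * R0 \<omega>" by (simp add: w_def z_def)
      have e2: "(a + b)\<^sup>2 \<le> 2 * a\<^sup>2 + 2 * b\<^sup>2" for a b :: real
      proof -
        have "0 \<le> (a - b)\<^sup>2" by simp
        then show ?thesis by (simp add: power2_eq_square algebra_simps)
      qed
      have e3: "(\<eta>\<^sup>2 * R0 \<omega>)\<^sup>2 = \<eta>^4 * (R0 \<omega>)\<^sup>2"
        by (simp add: power_mult_distrib flip: power_mult)
      show "(w \<eta> \<omega>)\<^sup>2 \<le> 2 * (z \<eta> \<omega>)\<^sup>2 + 2 * \<eta>^4 * (R0 \<omega>)\<^sup>2"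
        using e2[of "z \<eta> \<omega>" "\<eta>\<^sup>2 * R0 \<omega>"] unfolding e1 e3 by (simp add: mult.assoc)
    qed
    also have "\<dots> = 2 * (\<integral>\<omega>. (z \<eta> \<omega>)\<^sup>2 \<partial>\<Omega>) + 2 * \<eta>^4 * (\<integral>\<omega>. (R0 \<omega>)\<^sup>2 \<partial>\<Omega>)"
      using zi[of \<eta>] elim R0_L2(2) by simp
    also have "\<dots> \<le> D * \<eta>^4" using elim by (simp add: D_def algebra_simps)
    finally show ?case using elim by simp
  qed
  have dif: "\<phi> differentiable (at x)" for x using sm unfolding smooth_fun_def
    by (metis funpow_0)
  have "continuous_on UNIV \<phi>"
    using dif by (intro continuous_at_imp_continuous_on) (auto intro: differentiable_imp_continuous_within)
  then have phim[measurable]: "\<phi> \<in> borel_measurable borel" by (rule borel_measurable_continuous_onI)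
  define r where "r y = \<phi> y - \<phi> 0 - c1 * y - c2 / 2 * y\<^sup>2" for y
  have rm[measurable]: "r \<in> borel_measurable borel" unfolding r_def by measurable
  obtain K where K0: "K \<ge> 0" and K: "\<And>y. \<bar>y\<bar> \<le> M \<Longrightarrow> \<bar>r y\<bar> \<le> K * \<bar>y\<bar>^3"
    using taylor3[OF sm, of M] unfolding r_def c1_def c2_def by blast
  have rint: "integrable \<Omega> (\<lambda>\<omega>. r (B \<eta> \<omega>))" if "\<eta> > 0" for \<eta>
  proof (rule P.integrable_const_bound[where B="K * \<bar>M\<bar>^3"])
    show "AE \<omega> in \<Omega>. norm (r (B \<eta> \<omega>)) \<le> K * \<bar>M\<bar>^3"
      using bound[OF that]
    proof eventually_elim
      case (elim \<omega>)
      have "\<bar>B \<eta> \<omega>\<bar>^3 \<le> \<bar>M\<bar>^3" using elim by (intro power_mono) auto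
      then have "K * \<bar>B \<eta> \<omega>\<bar>^3 \<le> K * \<bar>M\<bar>^3" using K0 by (rule mult_left_mono)
      then show ?case using K[OF elim] by simp
    qed
    show "(\<lambda>\<omega>. r (B \<eta> \<omega>)) \<in> borel_measurable \<Omega>" using meas[OF that] by measurable
  qed
  define T1 where "T1 \<eta> = (\<integral>\<omega>. z \<eta> \<omega> \<partial>\<Omega>) / \<eta>\<^sup>2" for \<eta>
  define T2 where "T2 \<eta> = ((\<integral>\<omega>. (B \<eta> \<omega>)\<^sup>2 \<partial>\<Omega>) - \<eta>\<^sup>2 * (\<integral>\<omega>. (B0 \<omega>)\<^sup>2 \<partial>\<Omega>)) / \<eta>\<^sup>2" for \<eta>
  define T3 where "T3 \<eta> = (\<integral>\<omega>. r (B \<eta> \<omega>) \<partial>\<Omega>) / \<eta>\<^sup>2" for \<eta>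
  have eqn: "\<forall>\<^sub>F \<eta> in at_right 0. c1 * T1 \<eta> + c2 / 2 * T2 \<eta> + T3 \<eta> =
       ((\<integral>y. \<phi> y \<partial>(distr \<Omega> borel (B \<eta>)))
              - \<phi> 0
              - \<eta> * (\<integral>\<omega>. B0 \<omega> \<partial>\<Omega>) * deriv \<phi> 0
              - \<eta>\<^sup>2 / 2 * (\<integral>\<omega>. (B0 \<omega>)\<^sup>2 \<partial>\<Omega>) * (deriv ^^ 2) \<phi> 0
              - \<eta>\<^sup>2 * (\<integral>\<omega>. R0 \<omega> \<partial>\<Omega>) * deriv \<phi> 0) / \<eta>\<^sup>2"
    using evpos
  proof eventually_elim
    case (elim \<eta>)
    have "(\<integral>y. \<phi> y \<partial>(distr \<Omega> borel (B \<eta>))) = (\<integral>\<omega>. \<phi> (B \<eta> \<omega>) \<partial>\<Omega>)"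
      by (rule integral_distr[OF meas[OF elim] phim])
    also have "\<dots> = (\<integral>\<omega>. \<phi> 0 + c1 * B \<eta> \<omega> + c2 / 2 * (B \<eta> \<omega>)\<^sup>2 + r (B \<eta> \<omega>) \<partial>\<Omega>)"
      by (simp add: r_def)
    also have "\<dots> = \<phi> 0 + c1 * (\<integral>\<omega>. B \<eta> \<omega> \<partial>\<Omega>) + c2 / 2 * (\<integral>\<omega>. (B \<eta> \<omega>)\<^sup>2 \<partial>\<Omega>) + (\<integral>\<omega>. r (B \<eta> \<omega>) \<partial>\<Omega>)"
      using Bi[OF elim] Bsqi[OF elim] rint[OF elim] by (simp add: P.prob_space)
    finally have e1: "(\<integral>y. \<phi> y \<partial>(distr \<Omega> borel (B \<eta>))) = \<dots>" .
    have e2: "(\<integral>\<omega>. z \<eta> \<omega> \<partial>\<Omega>) = (\<integral>\<omega>. B \<eta> \<omega> \<partial>\<Omega>) - \<eta> * (\<integral>\<omega>. B0 \<omega> \<partial>\<Omega>) - \<eta>\<^sup>2 * (\<integral>\<omega>. R0 \<omega> \<partial>\<Omega>)"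
      unfolding z_def using Bi[OF elim] B0i R0i by simp
    show ?case unfolding e1 T1_def T2_def T3_def e2 c1_def[symmetric] c2_def[symmetric]
      using elim by (simp add: field_simps)
  qed
  have T1lim: "(T1 \<longlongrightarrow> 0) (at_right 0)"
    using weakz[of "\<lambda>_. 1"] unfolding T1_def by (simp add: P.prob_space)
  have lim_id: "((\<lambda>\<eta>::real. \<eta>) \<longlongrightarrow> 0) (at_right 0)" by (rule tendsto_ident_at)
  define sb where "sb = sqrt (\<integral>\<omega>. (B0 \<omega>)\<^sup>2 \<partial>\<Omega>)"
  have sb0: "0 \<le> sb" unfolding sb_def by (simp add: integral_nonneg_AE)
  have sqw: "sqrt (\<integral>\<omega>. (w \<eta> \<omega>)\<^sup>2 \<partial>\<Omega>) \<le> sqrt D * \<eta>\<^sup>2"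
    if "0 < \<eta>" "(\<integral>\<omega>. (w \<eta> \<omega>)\<^sup>2 \<partial>\<Omega>) \<le> D * \<eta>^4" for \<eta>
  proof -
    have "sqrt (\<integral>\<omega>. (w \<eta> \<omega>)\<^sup>2 \<partial>\<Omega>) \<le> sqrt (D * \<eta>^4)" using that(2) by simp
    also have "\<dots> = sqrt D * \<eta>\<^sup>2"
    proof -
      have "sqrt (\<eta>^4) = \<eta>\<^sup>2" by (rule real_sqrt_unique) auto
      then show ?thesis by (simp add: real_sqrt_mult)
    qed
    finally show ?thesis .
  qed
  have T2lim: "(T2 \<longlongrightarrow> 0) (at_right 0)"
  proof (rule Lim_null_comparison)
    show "\<forall>\<^sub>F \<eta> in at_right 0. norm (T2 \<eta>) \<le> D * \<eta>\<^sup>2 + 2 * sqrt D * sb * \<eta>"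
      using evw
    proof eventually_elim
      case (elim \<eta>)
      then have ep: "0 < \<eta>" and wb: "(\<integral>\<omega>. (w \<eta> \<omega>)\<^sup>2 \<partial>\<Omega>) \<le> D * \<eta>^4" by auto
      have wB0: "integrable \<Omega> (\<lambda>\<omega>. w \<eta> \<omega> * B0 \<omega>)"
        by (rule CS_real(1)[OF wm[OF ep] B0_L2(1) wi[OF ep] B0_L2(2)])
      have "(\<integral>\<omega>. (B \<eta> \<omega>)\<^sup>2 \<partial>\<Omega>) = (\<integral>\<omega>. (w \<eta> \<omega>)\<^sup>2 + 2 * \<eta> * (w \<eta> \<omega> * B0 \<omega>) + \<eta>\<^sup>2 * (B0 \<omega>)\<^sup>2 \<partial>\<Omega>)"
        by (rule Bochner_Integration.integral_cong) (auto simp: w_def power2_eq_square algebra_simps)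
      also have "\<dots> = (\<integral>\<omega>. (w \<eta> \<omega>)\<^sup>2 \<partial>\<Omega>) + 2 * \<eta> * (\<integral>\<omega>. w \<eta> \<omega> * B0 \<omega> \<partial>\<Omega>) + \<eta>\<^sup>2 * (\<integral>\<omega>. (B0 \<omega>)\<^sup>2 \<partial>\<Omega>)"
        using wi[OF ep] wB0 B0_L2(2) by simp
      finally have "T2 \<eta> = ((\<integral>\<omega>. (w \<eta> \<omega>)\<^sup>2 \<partial>\<Omega>) + 2 * \<eta> * (\<integral>\<omega>. w \<eta> \<omega> * B0 \<omega> \<partial>\<Omega>)) / \<eta>\<^sup>2"
        by (simp add: T2_def)
      moreover have "\<bar>\<integral>\<omega>. w \<eta> \<omega> * B0 \<omega> \<partial>\<Omega>\<bar> \<le> sqrt D * \<eta>\<^sup>2 * sb"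
      proof -
        have "\<bar>\<integral>\<omega>. w \<eta> \<omega> * B0 \<omega> \<partial>\<Omega>\<bar> \<le> (\<integral>\<omega>. \<bar>w \<eta> \<omega> * B0 \<omega>\<bar> \<partial>\<Omega>)"
          by (rule integral_abs_bound)
        also have "\<dots> \<le> sqrt (\<integral>\<omega>. (w \<eta> \<omega>)\<^sup>2 \<partial>\<Omega>) * sb"
          unfolding sb_def by (rule CS_real(2)[OF wm[OF ep] B0_L2(1) wi[OF ep] B0_L2(2)])
        also have "\<dots> \<le> sqrt D * \<eta>\<^sup>2 * sb"
          using sqw[OF ep wb] sb0 by (rule mult_right_mono)
        finally show ?thesis .
      qed
      moreover have "0 \<le> (\<integral>\<omega>. (w \<eta> \<omega>)\<^sup>2 \<partial>\<Omega>)" by (simp add: integral_nonneg_AE)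
      ultimately have T2eq: "T2 \<eta> = ((\<integral>\<omega>. (w \<eta> \<omega>)\<^sup>2 \<partial>\<Omega>) + 2 * \<eta> * (\<integral>\<omega>. w \<eta> \<omega> * B0 \<omega> \<partial>\<Omega>)) / \<eta>\<^sup>2"
        and Xb: "\<bar>\<integral>\<omega>. w \<eta> \<omega> * B0 \<omega> \<partial>\<Omega>\<bar> \<le> sqrt D * \<eta>\<^sup>2 * sb"
        and W0: "0 \<le> (\<integral>\<omega>. (w \<eta> \<omega>)\<^sup>2 \<partial>\<Omega>)" by auto
      have num: "\<bar>(\<integral>\<omega>. (w \<eta> \<omega>)\<^sup>2 \<partial>\<Omega>) + 2 * \<eta> * (\<integral>\<omega>. w \<eta> \<omega> * B0 \<omega> \<partial>\<Omega>)\<bar>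
          \<le> D * \<eta>^4 + 2 * \<eta> * (sqrt D * \<eta>\<^sup>2 * sb)"
      proof -
        have "\<bar>2 * \<eta> * (\<integral>\<omega>. w \<eta> \<omega> * B0 \<omega> \<partial>\<Omega>)\<bar> = 2 * \<eta> * \<bar>\<integral>\<omega>. w \<eta> \<omega> * B0 \<omega> \<partial>\<Omega>\<bar>"
          using ep by (simp add: abs_mult)
        also have "\<dots> \<le> 2 * \<eta> * (sqrt D * \<eta>\<^sup>2 * sb)"
          using Xb ep by (intro mult_left_mono) auto
        finally have "\<bar>2 * \<eta> * (\<integral>\<omega>. w \<eta> \<omega> * B0 \<omega> \<partial>\<Omega>)\<bar> \<le> 2 * \<eta> * (sqrt D * \<eta>\<^sup>2 * sb)" .
        then show ?thesis using W0 wb abs_triangle_ineq[of "\<integral>\<omega>. (w \<eta> \<omega>)\<^sup>2 \<partial>\<Omega>" "2 * \<eta> * (\<integral>\<omega>. w \<eta> \<omega> * B0 \<omega> \<partial>\<Omega>)"]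
          by linarith
      qed
      have "\<bar>T2 \<eta>\<bar> \<le> (D * \<eta>^4 + 2 * \<eta> * (sqrt D * \<eta>\<^sup>2 * sb)) / \<eta>\<^sup>2"
        unfolding T2eq abs_divide abs_power2 using num by (rule divide_right_mono) simp
      also have "\<dots> = D * \<eta>\<^sup>2 + 2 * sqrt D * sb * \<eta>"
        using ep by (simp add: field_simps power2_eq_square power4_eq_xxxx)
      finally show ?case by simp
    qed
    have "((\<lambda>\<eta>. D * \<eta>\<^sup>2 + 2 * sqrt D * sb * \<eta>) \<longlongrightarrow> D * 0\<^sup>2 + 2 * sqrt D * sb * 0) (at_right 0)"
      by (intro tendsto_intros lim_id)
    then show "((\<lambda>\<eta>. D * \<eta>\<^sup>2 + 2 * sqrt D * sb * \<eta>) \<longlongrightarrow> 0) (at_right 0)" by simp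
  qed
  have EBlim: "((\<lambda>\<eta>. \<integral>\<omega>. \<bar>B \<eta> \<omega>\<bar> \<partial>\<Omega>) \<longlongrightarrow> 0) (at_right 0)"
  proof (rule Lim_null_comparison)
    show "\<forall>\<^sub>F \<eta> in at_right 0. norm (\<integral>\<omega>. \<bar>B \<eta> \<omega>\<bar> \<partial>\<Omega>) \<le> \<eta> * (\<integral>\<omega>. \<bar>B0 \<omega>\<bar> \<partial>\<Omega>) + sqrt D * \<eta>\<^sup>2"
      using evw
    proof eventually_elim
      case (elim \<eta>)
      then have ep: "0 < \<eta>" and wb: "(\<integral>\<omega>. (w \<eta> \<omega>)\<^sup>2 \<partial>\<Omega>) \<le> D * \<eta>^4" by auto
      have wint: "integrable \<Omega> (w \<eta>)" unfolding w_def using Bi[OF ep] B0i by simp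
      have "(\<integral>\<omega>. \<bar>B \<eta> \<omega>\<bar> \<partial>\<Omega>) \<le> (\<integral>\<omega>. \<eta> * \<bar>B0 \<omega>\<bar> + \<bar>w \<eta> \<omega>\<bar> \<partial>\<Omega>)"
      proof (rule integral_mono)
        show "integrable \<Omega> (\<lambda>\<omega>. \<bar>B \<eta> \<omega>\<bar>)" using Bi[OF ep] by simp
        show "integrable \<Omega> (\<lambda>\<omega>. \<eta> * \<bar>B0 \<omega>\<bar> + \<bar>w \<eta> \<omega>\<bar>)" using B0i wint by simp
        fix \<omega>
        have "\<bar>B \<eta> \<omega>\<bar> = \<bar>\<eta> * B0 \<omega> + w \<eta> \<omega>\<bar>" by (simp add: w_def)
        also have "\<dots> \<le> \<bar>\<eta> * B0 \<omega>\<bar> + \<bar>w \<eta> \<omega>\<bar>" by (rule abs_triangle_ineq)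
        finally show "\<bar>B \<eta> \<omega>\<bar> \<le> \<eta> * \<bar>B0 \<omega>\<bar> + \<bar>w \<eta> \<omega>\<bar>" using ep by (simp add: abs_mult)
      qed
      also have "\<dots> = \<eta> * (\<integral>\<omega>. \<bar>B0 \<omega>\<bar> \<partial>\<Omega>) + (\<integral>\<omega>. \<bar>w \<eta> \<omega>\<bar> \<partial>\<Omega>)"
        using B0i wint by simp
      also have "(\<integral>\<omega>. \<bar>w \<eta> \<omega>\<bar> \<partial>\<Omega>) \<le> sqrt D * \<eta>\<^sup>2"
      proof -
        have "(\<integral>\<omega>. \<bar>w \<eta> \<omega> * 1\<bar> \<partial>\<Omega>) \<le> sqrt (\<integral>\<omega>. (w \<eta> \<omega>)\<^sup>2 \<partial>\<Omega>) * sqrt (\<integral>\<omega>. 1\<^sup>2 \<partial>\<Omega>)"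
          by (rule CS_real(2)[OF wm[OF ep] _ wi[OF ep]]) (auto simp: P.prob_space)
        then have "(\<integral>\<omega>. \<bar>w \<eta> \<omega>\<bar> \<partial>\<Omega>) \<le> sqrt (\<integral>\<omega>. (w \<eta> \<omega>)\<^sup>2 \<partial>\<Omega>)"
          by (simp add: P.prob_space)
        then show ?thesis using sqw[OF ep wb] by linarith
      qed
      finally show ?case by (simp add: integral_nonneg_AE)
    qed
    have "((\<lambda>\<eta>. \<eta> * (\<integral>\<omega>. \<bar>B0 \<omega>\<bar> \<partial>\<Omega>) + sqrt D * \<eta>\<^sup>2) \<longlongrightarrow> 0 * (\<integral>\<omega>. \<bar>B0 \<omega>\<bar> \<partial>\<Omega>) + sqrt D * 0\<^sup>2) (at_right 0)"
      by (intro tendsto_intros lim_id)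
    then show "((\<lambda>\<eta>. \<eta> * (\<integral>\<omega>. \<bar>B0 \<omega>\<bar> \<partial>\<Omega>) + sqrt D * \<eta>\<^sup>2) \<longlongrightarrow> 0) (at_right 0)" by simp
  qed
  have finm: "finite_measure \<Omega>" using prob unfolding prob_space_def by blast
  define I where "I \<eta> = (\<integral>\<omega>. \<bar>B \<eta> \<omega>\<bar> * (B0 \<omega>)\<^sup>2 \<partial>\<Omega>)" for \<eta>
  have Ilim: "(I \<longlongrightarrow> 0) (at_right 0)"
    unfolding I_def
  proof (rule UI[OF finm _ B0_L2(2), where Mb=M])
    show "(\<lambda>\<omega>. (B0 \<omega>)\<^sup>2) \<in> borel_measurable \<Omega>" by measurable
    show "\<forall>\<^sub>F \<eta> in at_right 0. B \<eta> \<in> borel_measurable \<Omega> \<and> (AE \<omega> in \<Omega>. \<bar>B \<eta> \<omega>\<bar> \<le> M)"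
      using evpos by eventually_elim (use meas bound in auto)
  qed (use EBlim in auto)
  have T3lim: "(T3 \<longlongrightarrow> 0) (at_right 0)"
  proof (rule Lim_null_comparison)
    show "\<forall>\<^sub>F \<eta> in at_right 0. norm (T3 \<eta>) \<le> K * (2 * I \<eta> + 2 * \<bar>M\<bar> * D * \<eta>\<^sup>2)"
      using evw
    proof eventually_elim
      case (elim \<eta>)
      then have ep: "0 < \<eta>" and wb: "(\<integral>\<omega>. (w \<eta> \<omega>)\<^sup>2 \<partial>\<Omega>) \<le> D * \<eta>^4" by auto
      have BB0i: "integrable \<Omega> (\<lambda>\<omega>. \<bar>B \<eta> \<omega>\<bar> * (B0 \<omega>)\<^sup>2)"
      proof (rule Bochner_Integration.integrable_bound[where f="\<lambda>\<omega>. \<bar>M\<bar> * (B0 \<omega>)\<^sup>2"])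
        show "integrable \<Omega> (\<lambda>\<omega>. \<bar>M\<bar> * (B0 \<omega>)\<^sup>2)" using B0_L2(2) by simp
        show "(\<lambda>\<omega>. \<bar>B \<eta> \<omega>\<bar> * (B0 \<omega>)\<^sup>2) \<in> borel_measurable \<Omega>" using meas[OF ep] by measurable
        show "AE \<omega> in \<Omega>. norm (\<bar>B \<eta> \<omega>\<bar> * (B0 \<omega>)\<^sup>2) \<le> norm (\<bar>M\<bar> * (B0 \<omega>)\<^sup>2)"
          using bound[OF ep] by eventually_elim (auto simp: abs_mult intro!: mult_right_mono)
      qed
      have "\<bar>\<integral>\<omega>. r (B \<eta> \<omega>) \<partial>\<Omega>\<bar> \<le> (\<integral>\<omega>. \<bar>r (B \<eta> \<omega>)\<bar> \<partial>\<Omega>)" by (rule integral_abs_bound)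
      also have "\<dots> \<le> (\<integral>\<omega>. K * (2 * \<eta>\<^sup>2 * (\<bar>B \<eta> \<omega>\<bar> * (B0 \<omega>)\<^sup>2) + 2 * \<bar>M\<bar> * (w \<eta> \<omega>)\<^sup>2) \<partial>\<Omega>)"
      proof (rule integral_mono_AE)
        show "integrable \<Omega> (\<lambda>\<omega>. \<bar>r (B \<eta> \<omega>)\<bar>)" using rint[OF ep] by simp
        show "integrable \<Omega> (\<lambda>\<omega>. K * (2 * \<eta>\<^sup>2 * (\<bar>B \<eta> \<omega>\<bar> * (B0 \<omega>)\<^sup>2) + 2 * \<bar>M\<bar> * (w \<eta> \<omega>)\<^sup>2))"
          using BB0i wi[OF ep] by simp
        show "AE \<omega> in \<Omega>. \<bar>r (B \<eta> \<omega>)\<bar> \<le> K * (2 * \<eta>\<^sup>2 * (\<bar>B \<eta> \<omega>\<bar> * (B0 \<omega>)\<^sup>2) + 2 * \<bar>M\<bar> * (w \<eta> \<omega>)\<^sup>2)"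
          using bound[OF ep]
        proof eventually_elim
          case (elim \<omega>)
          have "\<bar>r (B \<eta> \<omega>)\<bar> \<le> K * \<bar>B \<eta> \<omega>\<bar>^3" by (rule K[OF elim])
          also have "\<dots> \<le> K * (2 * \<eta>\<^sup>2 * (\<bar>B \<eta> \<omega>\<bar> * (B0 \<omega>)\<^sup>2) + 2 * \<bar>M\<bar> * (w \<eta> \<omega>)\<^sup>2)"
            unfolding w_def using cube_bound[OF elim, of \<eta> "B0 \<omega>"] K0 by (rule mult_left_mono)
          finally show ?case .
        qed
      qed
      also have "\<dots> = K * (2 * \<eta>\<^sup>2 * I \<eta> + 2 * \<bar>M\<bar> * (\<integral>\<omega>. (w \<eta> \<omega>)\<^sup>2 \<partial>\<Omega>))"
        using BB0i wi[OF ep] by (simp add: I_def)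
      also have "\<dots> \<le> K * (2 * \<eta>\<^sup>2 * I \<eta> + 2 * \<bar>M\<bar> * (D * \<eta>^4))"
        using wb K0 by (intro mult_left_mono add_left_mono) auto
      finally have num: "\<bar>\<integral>\<omega>. r (B \<eta> \<omega>) \<partial>\<Omega>\<bar> \<le> K * (2 * \<eta>\<^sup>2 * I \<eta> + 2 * \<bar>M\<bar> * (D * \<eta>^4))" .
      have "norm (T3 \<eta>) \<le> K * (2 * \<eta>\<^sup>2 * I \<eta> + 2 * \<bar>M\<bar> * (D * \<eta>^4)) / \<eta>\<^sup>2"
        unfolding T3_def real_norm_def abs_divide abs_power2 using num by (rule divide_right_mono) simp
      also have "\<dots> = K * (2 * I \<eta> + 2 * \<bar>M\<bar> * D * \<eta>\<^sup>2)"
        using ep by (simp add: field_simps power2_eq_square power4_eq_xxxx)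
      finally show ?case .
    qed
    have "((\<lambda>\<eta>. K * (2 * I \<eta> + 2 * \<bar>M\<bar> * D * \<eta>\<^sup>2)) \<longlongrightarrow> K * (2 * 0 + 2 * \<bar>M\<bar> * D * 0\<^sup>2)) (at_right 0)"
      by (intro tendsto_intros lim_id Ilim)
    then show "((\<lambda>\<eta>. K * (2 * I \<eta> + 2 * \<bar>M\<bar> * D * \<eta>\<^sup>2)) \<longlongrightarrow> 0) (at_right 0)" by simp
  qed
  have "((\<lambda>\<eta>. c1 * T1 \<eta> + c2 / 2 * T2 \<eta> + T3 \<eta>) \<longlongrightarrow> 0) (at_right 0)"
    using tendsto_add[OF tendsto_add[OF tendsto_mult_right_zero[OF T1lim, where c=c1] tendsto_mult_right_zero[OF T2lim, where c="c2/2"]] T3lim]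
    by simp
  then show "((\<lambda>\<eta>. ((\<integral>y. \<phi> y \<partial>(distr \<Omega> borel (B \<eta>)))
              - \<phi> 0
              - \<eta> * (\<integral>\<omega>. B0 \<omega> \<partial>\<Omega>) * deriv \<phi> 0
              - \<eta>\<^sup>2 / 2 * (\<integral>\<omega>. (B0 \<omega>)\<^sup>2 \<partial>\<Omega>) * (deriv ^^ 2) \<phi> 0
              - \<eta>\<^sup>2 * (\<integral>\<omega>. R0 \<omega> \<partial>\<Omega>) * deriv \<phi> 0) / \<eta>\<^sup>2)
          \<longlongrightarrow> 0) (at_right 0)"
    by (rule Lim_transform_eventually[OF _ eqn])
qed

end
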